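(* For any $h$ and any $\mu_{h-1}:\mathcal X\to\mathbb R^{\mathsf d}$, the class $$\mathcal W_h(\mu_{h-1})=\Big\{w=\frac{\langle\mu_{h-1},\theta^{\rm up}\rangle}{\langle\mu_{h-1},\theta^{\rm down}\rangle}:\|w\|_\infty\le C^{\mathbf x}_{h-1}C^{\mathbf a}_{h-1},\ \theta^{\rm up},\theta^{\rm down}\in\mathbb R^{\mathsf d}\Big\}$$ has pseudo-dimension $\mathrm{Pdim}(\mathcal W_h(\mu_{h-1}))\le4(\mathsf d+1)\log(8e)$.
   Context: $C^{\mathbf x}_{h-1},C^{\mathbf a}_{h-1}>0$ are constants. Pseudo-dimension of $\mathcal F\subseteq\mathbb R^{\mathcal X}$: the largest $m$ such that some $x_1,\dots,x_m\in\mathcal X$ are pseudo-shattered, i.e. there exist $c_1,\dots,c_m\in\mathbb R$ such that for every $y\in\{-1,+1\}^m$ some $f\in\mathcal F$ has $\mathrm{sgn}(f(x_i)-c_i)=y_i$ for all $i$. *)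

theory Defs
  imports "HOL-Analysis.Analysis" "HOL-Library.Extended_Nat"
begin

definition pseudo_shatters :: "('x \<Rightarrow> real) set \<Rightarrow> 'x list \<Rightarrow> bool" where
  "pseudo_shatters F xs \<longleftrightarrow>
     (\<exists>c :: nat \<Rightarrow> real. \<forall>y :: nat \<Rightarrow> real. (\<forall>i<length xs. y i \<in> {-1, 1}) \<longrightarrow>
        (\<exists>f\<in>F. \<forall>i<length xs. sgn (f (xs ! i) - c i) = y i))"

definition pdim :: "('x \<Rightarrow> real) set \<Rightarrow> enat" where
  "pdim F = Sup {enat (length xs) | xs. distinct xs \<and> pseudo_shatters F xs}"

definition W_class :: "('x \<Rightarrow> real^'d) \<Rightarrow> real \<Rightarrow> real \<Rightarrow> ('x \<Rightarrow> real) set" where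
  "W_class \<mu> Cx Ca = {w. \<exists>\<theta>up \<theta>down :: real^'d.
       w = (\<lambda>x. (\<mu> x \<bullet> \<theta>up) / (\<mu> x \<bullet> \<theta>down)) \<and> (\<forall>x. \<bar>w x\<bar> \<le> Cx * Ca)}"

end

theory Submission
  imports Defs
begin

definition sv :: "'a::euclidean_space set \<Rightarrow> 'a list \<Rightarrow> real list set" where
  "sv V us = {map (\<lambda>u. sgn (u \<bullet> v)) us | v. v \<in> V}"

lemma sv_finite: "finite (sv V us)"
proof -
  have "sv V us \<subseteq> {xs. set xs \<subseteq> {-1,0,1} \<and> length xs = length us}"
    unfolding sv_def by (auto simp: sgn_real_def)
  moreover have "finite {xs. set xs \<subseteq> {-1::real,0,1} \<and> length xs = length us}"
    by (rule finite_lists_length_eq) auto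
  ultimately show ?thesis by (rule finite_subset)
qed

lemma sgn_convex:
  fixes p q l :: real
  assumes "sgn p = sgn q" "0 < l" "l < 1"
  shows "sgn ((1 - l) * p + l * q) = sgn p"
proof -
  have "p > 0 \<and> q > 0 \<or> p < 0 \<and> q < 0 \<or> p = 0 \<and> q = 0"
    using assms(1) by (auto simp: sgn_real_def split: if_splits)
  then show ?thesis
  proof (elim disjE)
    assume "p > 0 \<and> q > 0" then show ?thesis using assms
      by (simp add: add_pos_pos)
  next
    assume h: "p < 0 \<and> q < 0"
    then have "(1 - l) * p < 0" "l * q < 0" using assms
      by (simp_all add: mult_pos_neg)
    then show ?thesis using h by simp
  qed simp
qed

lemma sv_step:
  assumes "subspace V"
  shows "card (sv V (u # us)) \<le> card (sv V us) + 2 * card (sv (V \<inter> {v. u \<bullet> v = 0}) us)"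
proof -
  define K where "K = V \<inter> {v. u \<bullet> v = 0}"
  define A1 where "A1 = {t. (1::real) # t \<in> sv V (u # us)}"
  define A2 where "A2 = {t. (-1::real) # t \<in> sv V (u # us)}"
  have sub: "sv V (u # us) \<subseteq> Cons 0 ` sv K us \<union> Cons 1 ` A1 \<union> Cons (-1) ` A2"
  proof
    fix s assume "s \<in> sv V (u # us)"
    then obtain v where v: "v \<in> V" "s = sgn (u \<bullet> v) # map (\<lambda>u. sgn (u \<bullet> v)) us"
      unfolding sv_def by auto
    consider "u \<bullet> v = 0" | "u \<bullet> v > 0" | "u \<bullet> v < 0" by linarith
    then show "s \<in> Cons 0 ` sv K us \<union> Cons 1 ` A1 \<union> Cons (-1) ` A2"
    proof cases
      case 1
      then have "map (\<lambda>u. sgn (u \<bullet> v)) us \<in> sv K us" using v unfolding sv_def K_def by auto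
      then show ?thesis using v 1 by auto
    next
      case 2
      then have "map (\<lambda>u. sgn (u \<bullet> v)) us \<in> A1" using v \<open>s \<in> _\<close> unfolding A1_def by auto
      then show ?thesis using v 2 by auto
    next
      case 3
      then have "map (\<lambda>u. sgn (u \<bullet> v)) us \<in> A2" using v \<open>s \<in> _\<close> unfolding A2_def by auto
      then show ?thesis using v 3 by auto
    qed
  qed
  have A1s: "A1 \<subseteq> sv V us" unfolding A1_def sv_def by auto
  have A2s: "A2 \<subseteq> sv V us" unfolding A2_def sv_def by auto
  have fin1: "finite A1" using A1s sv_finite finite_subset by blast
  have fin2: "finite A2" using A2s sv_finite finite_subset by blast
  have int: "A1 \<inter> A2 \<subseteq> sv K us"
  proof
    fix t assume "t \<in> A1 \<inter> A2"
    then have t1: "1 # t \<in> sv V (u # us)" and t2: "(-1) # t \<in> sv V (u # us)"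
      unfolding A1_def A2_def by auto
    have "\<exists>v. 1 # t = map (\<lambda>u. sgn (u \<bullet> v)) (u # us) \<and> v \<in> V"
      using t1 unfolding sv_def by (simp only: mem_Collect_eq)
    then obtain v1 where v1b: "1 # t = map (\<lambda>u. sgn (u \<bullet> v1)) (u # us) \<and> v1 \<in> V"
      by (rule exE)
    note v1a = conjunct2[OF v1b] conjunct1[OF v1b]
    have "\<exists>v. (-1) # t = map (\<lambda>u. sgn (u \<bullet> v)) (u # us) \<and> v \<in> V"
      using t2 unfolding sv_def by (simp only: mem_Collect_eq)
    then obtain v2 where v2b: "(-1) # t = map (\<lambda>u. sgn (u \<bullet> v2)) (u # us) \<and> v2 \<in> V"
      by (rule exE)
    note v2a = conjunct2[OF v2b] conjunct1[OF v2b]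
    have v1: "v1 \<in> V" "1 = sgn (u \<bullet> v1)" "t = map (\<lambda>u. sgn (u \<bullet> v1)) us"
      using v1a by (simp_all only: list.map list.inject)
    have v2: "v2 \<in> V" "-1 = sgn (u \<bullet> v2)" "t = map (\<lambda>u. sgn (u \<bullet> v2)) us"
      using v2a by (simp_all only: list.map list.inject)
    define p where "p = u \<bullet> v1"
    define q where "q = u \<bullet> v2"
    have p: "p > 0" using v1(2) unfolding p_def by (auto simp: sgn_real_def split: if_splits)
    have q: "q < 0" using v2(2) unfolding q_def by (auto simp: sgn_real_def split: if_splits)
    define l where "l = p / (p - q)"
    have l0: "0 < l" and l1: "l < 1" using p q unfolding l_def by (auto simp: field_simps)
    define v where "v = (1 - l) *\<^sub>R v1 + l *\<^sub>R v2"
    have vV: "v \<in> V" unfolding v_def using assms v1(1) v2(1)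
      by (simp add: subspace_add subspace_scale)
    have "u \<bullet> v = (1 - l) * p + l * q" unfolding v_def p_def q_def by (simp add: inner_add_right)
    also have "\<dots> = 0" unfolding l_def using p q by (simp add: field_simps)
    finally have uv: "u \<bullet> v = 0" .
    have "map (\<lambda>u. sgn (u \<bullet> v)) us = t"
    proof (rule nth_equalityI)
      show "length (map (\<lambda>u. sgn (u \<bullet> v)) us) = length t" using v1 by simp
    next
      fix i assume i: "i < length (map (\<lambda>u. sgn (u \<bullet> v)) us)"
      then have e: "sgn (us ! i \<bullet> v1) = sgn (us ! i \<bullet> v2)"
        using v1(3) v2(3) by (metis length_map nth_map)
      have "us ! i \<bullet> v = (1 - l) * (us ! i \<bullet> v1) + l * (us ! i \<bullet> v2)"
        unfolding v_def by (simp add: inner_add_right)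
      then have "sgn (us ! i \<bullet> v) = sgn (us ! i \<bullet> v1)"
        using sgn_convex[OF e l0 l1] by simp
      then show "map (\<lambda>u. sgn (u \<bullet> v)) us ! i = t ! i" using i v1(3) by simp
    qed
    then show "t \<in> sv K us" unfolding sv_def K_def using vV uv by auto
  qed
  have c1: "card (sv V (u # us)) \<le> card (Cons 0 ` sv K us \<union> Cons 1 ` A1 \<union> Cons (-1) ` A2)"
    using sub by (intro card_mono) (auto simp: sv_finite fin1 fin2)
  also have "\<dots> \<le> card (Cons 0 ` sv K us) + card (Cons 1 ` A1) + card (Cons (-1) ` A2)"
    by (meson add_mono card_Un_le le_trans order_refl)
  also have "\<dots> \<le> card (sv K us) + card A1 + card A2"
    by (intro add_mono card_image_le) (auto simp: sv_finite fin1 fin2)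
  finally have c2: "card (sv V (u # us)) \<le> card (sv K us) + card A1 + card A2" .
  have c3: "card A1 + card A2 = card (A1 \<union> A2) + card (A1 \<inter> A2)"
    using card_Un_Int[OF fin1 fin2] .
  have c4: "card (A1 \<union> A2) \<le> card (sv V us)"
    using A1s A2s by (intro card_mono) (auto simp: sv_finite)
  have c5: "card (A1 \<inter> A2) \<le> card (sv K us)"
    using int by (intro card_mono) (auto simp: sv_finite)
  from c2 c3 c4 c5 show ?thesis unfolding K_def by linarith
qed

lemma sv_bound:
  assumes "subspace V"
  shows "real (card (sv V us)) \<le> 20 ^ dim V * (11/10) ^ length us"
  using assms
proof (induction us arbitrary: V)
  case Nil
  have "sv V [] \<subseteq> {[]}" unfolding sv_def by auto
  then have "card (sv V []) \<le> card {[]::real list}" by (intro card_mono) auto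
  then have "card (sv V []) \<le> 1" by simp
  then have h1: "real (card (sv V [])) \<le> 1" by simp
  have h2: "(1::real) \<le> 20 ^ dim V" by simp
  show ?case using h1 h2 by (simp only: list.size power_0 mult_1_right)
next
  case (Cons u us)
  define K where "K = V \<inter> {v. u \<bullet> v = 0}"
  have sK: "subspace K" unfolding K_def using Cons.prems subspace_hyperplane subspace_inter by blast
  show ?case
  proof (cases "\<forall>v\<in>V. u \<bullet> v = 0")
    case True
    have "sv V (u # us) \<subseteq> Cons 0 ` sv V us"
    proof
      fix s assume "s \<in> sv V (u # us)"
      then obtain v where v: "v \<in> V" "s = map (\<lambda>u. sgn (u \<bullet> v)) (u # us)"
        unfolding sv_def by auto
      have "map (\<lambda>u. sgn (u \<bullet> v)) us \<in> sv V us" unfolding sv_def using v(1) by auto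
      moreover have "s = 0 # map (\<lambda>u. sgn (u \<bullet> v)) us" using v True by simp
      ultimately show "s \<in> Cons 0 ` sv V us" by blast
    qed
    then have "card (sv V (u # us)) \<le> card (Cons 0 ` sv V us)"
      by (intro card_mono) (auto simp: sv_finite)
    also have "\<dots> \<le> card (sv V us)" by (rule card_image_le) (rule sv_finite)
    finally have "card (sv V (u # us)) \<le> card (sv V us)" .
    then have "real (card (sv V (u # us))) \<le> 20 ^ dim V * (11/10) ^ length us"
      using Cons.IH[OF Cons.prems] by linarith
    also have "\<dots> \<le> 20 ^ dim V * (11/10) ^ length (u # us)"
      by (intro mult_left_mono) auto
    finally show ?thesis .
  next
    case False
    then obtain v where v: "v \<in> V" "u \<bullet> v \<noteq> 0" by auto
    have "K \<subset> V" using v unfolding K_def by auto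
    have e1: "span K = K" using sK by simp
    have e2: "span V = V" using Cons.prems by simp
    have "span K \<subset> span V" unfolding e1 e2 by (rule \<open>K \<subset> V\<close>)
    then have dK: "dim K < dim V" by (rule dim_psubset)
    then have dK': "dim K \<le> dim V - 1" by simp
    have pos: "dim V \<ge> 1" using dK by simp
    have "real (card (sv K us)) \<le> 20 ^ dim K * (11/10) ^ length us" using Cons.IH[OF sK] .
    also have "\<dots> \<le> 20 ^ (dim V - 1) * (11/10) ^ length us"
      by (intro mult_right_mono power_increasing dK') auto
    finally have hK: "real (card (sv K us)) \<le> 20 ^ (dim V - 1) * (11/10) ^ length us" .
    have hV: "real (card (sv V us)) \<le> 20 ^ dim V * (11/10) ^ length us" using Cons.IH[OF Cons.prems] .
    have "real (card (sv V (u # us))) \<le> real (card (sv V us)) + 2 * real (card (sv K us))"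
      using sv_step[OF Cons.prems, of u us] unfolding K_def by linarith
    also have "\<dots> \<le> 20 ^ dim V * (11/10) ^ length us + 2 * (20 ^ (dim V - 1) * (11/10) ^ length us)"
      using hK hV by linarith
    also have "20 ^ dim V = (20::real) * 20 ^ (dim V - 1)" using pos
      by (cases "dim V") auto
    also have "(20::real) * 20 ^ (dim V - 1) * (11/10) ^ length us + 2 * (20 ^ (dim V - 1) * (11/10) ^ length us)
       = 20 * 20 ^ (dim V - 1) * (11/10) ^ length (u # us)" by (simp add: field_simps)
    also have "20 * 20 ^ (dim V - 1) = (20::real) ^ dim V" using pos
      by (cases "dim V") auto
    finally show ?thesis .
  qed
qed

lemma sgn_ratio:
  fixes p q c :: real
  shows "sgn (p / q - c) = (if sgn q = 0 then sgn (- c) else sgn (p - c * q) * sgn q)"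
proof (cases "q = 0")
  case True then show ?thesis by simp
next
  case False
  then have "p / q - c = (p - c * q) / q" by (simp add: field_simps)
  then have "sgn (p / q - c) = sgn (p - c * q) / sgn q" by simp
  then show ?thesis using False by (cases "q > 0") auto
qed

theorem lemma14:
  fixes \<mu> :: "'x \<Rightarrow> real^'d" and Cx Ca :: real
  assumes "Cx > 0" and "Ca > 0"
  shows "pdim (W_class \<mu> Cx Ca) \<le> enat (nat \<lfloor>4 * (real CARD('d) + 1) * ln (8 * exp 1)\<rfloor>)"
  unfolding pdim_def
proof (rule Sup_least, clarify)
  fix xs :: "'x list"
  assume "distinct xs" and sh: "pseudo_shatters (W_class \<mu> Cx Ca) xs"
  define m where "m = length xs"
  define d where "d = CARD('d)"
  obtain c where c: "\<And>y. (\<forall>i<m. y i \<in> {-1, 1}) \<Longrightarrow>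
        (\<exists>f\<in>W_class \<mu> Cx Ca. \<forall>i<m. sgn (f (xs ! i) - c i) = y i)"
    using sh unfolding pseudo_shatters_def m_def by blast
  define us :: "((real^'d) \<times> (real^'d)) list" where
    "us = map (\<lambda>i. (0, \<mu> (xs ! i))) [0..<m] @ map (\<lambda>i. (\<mu> (xs ! i), - c i *\<^sub>R \<mu> (xs ! i))) [0..<m]"
  define dec :: "real list \<Rightarrow> nat \<Rightarrow> real" where
    "dec \<sigma> i = (if \<sigma> ! i = 0 then sgn (- c i) else \<sigma> ! (m + i) * \<sigma> ! i)" for \<sigma> i
  have key: "{ys. set ys \<subseteq> {-1,1} \<and> length ys = m} \<subseteq> (\<lambda>\<sigma>. map (dec \<sigma>) [0..<m]) ` sv UNIV us"
  proof
    fix ys :: "real list" assume "ys \<in> {ys. set ys \<subseteq> {-1,1} \<and> length ys = m}"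
    then have ys: "set ys \<subseteq> {-1,1}" "length ys = m" by auto
    have "\<forall>i<m. ys ! i \<in> {-1, 1}" using ys nth_mem by blast
    then obtain f where f: "f \<in> W_class \<mu> Cx Ca" "\<forall>i<m. sgn (f (xs ! i) - c i) = ys ! i"
      using c[of "\<lambda>i. ys ! i"] by blast
    then obtain a b where ab: "f = (\<lambda>x. (\<mu> x \<bullet> a) / (\<mu> x \<bullet> b))" unfolding W_class_def by auto
    define \<sigma> where "\<sigma> = map (\<lambda>u. sgn (u \<bullet> (a, b))) us"
    have sig: "\<sigma> \<in> sv UNIV us" unfolding sv_def \<sigma>_def by auto
    have "map (dec \<sigma>) [0..<m] = ys"
    proof (rule nth_equalityI)
      show "length (map (dec \<sigma>) [0..<m]) = length ys" using ys by simp
    next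
      fix i assume "i < length (map (dec \<sigma>) [0..<m])"
      then have i: "i < m" by simp
      have s1: "\<sigma> ! i = sgn (\<mu> (xs ! i) \<bullet> b)"
        unfolding \<sigma>_def us_def using i by (simp add: nth_append inner_commute)
      have s2: "\<sigma> ! (m + i) = sgn (\<mu> (xs ! i) \<bullet> a - c i * (\<mu> (xs ! i) \<bullet> b))"
        unfolding \<sigma>_def us_def using i by (simp add: nth_append inner_commute)
      have "dec \<sigma> i = sgn (f (xs ! i) - c i)"
        unfolding dec_def s1 s2 ab sgn_ratio by (simp add: mult.commute)
      then show "map (dec \<sigma>) [0..<m] ! i = ys ! i" using f(2) i by simp
    qed
    then show "ys \<in> (\<lambda>\<sigma>. map (dec \<sigma>) [0..<m]) ` sv UNIV us" using sig by blast
  qed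
  have "(2::nat) ^ m = card {ys. set ys \<subseteq> {-1::real,1} \<and> length ys = m}"
    by (simp add: card_lists_length_eq numeral_2_eq_2)
  also have "\<dots> \<le> card ((\<lambda>\<sigma>. map (dec \<sigma>) [0..<m]) ` sv UNIV us)"
    using key by (intro card_mono) (auto simp: sv_finite)
  also have "\<dots> \<le> card (sv UNIV us)" by (rule card_image_le) (rule sv_finite)
  finally have "real ((2::nat) ^ m) \<le> real (card (sv UNIV us))" by linarith
  also have "\<dots> \<le> 20 ^ dim (UNIV :: ((real^'d) \<times> (real^'d)) set) * (11/10) ^ length us"
    by (rule sv_bound) simp
  also have "dim (UNIV :: ((real^'d) \<times> (real^'d)) set) = 2 * d"
    unfolding d_def by simp
  also have "length us = 2 * m" unfolding us_def by simp
  finally have b: "(2::real) ^ m \<le> 20 ^ (2 * d) * (11/10) ^ (2 * m)" by simp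
  have d1: "d \<ge> 1" unfolding d_def by simp
  have "m < 12 * d"
  proof (rule ccontr)
    assume "\<not> m < 12 * d"
    then have md: "12 * d \<le> m" by simp
    have "(400::real) ^ d < ((200/121) ^ 12) ^ d"
    proof (rule power_strict_mono)
      show "(400::real) < (200/121) ^ 12" by (simp add: power_divide)
    qed (use d1 in auto)
    also have "\<dots> = (200/121) ^ (12 * d)" by (simp add: power_mult)
    also have "\<dots> \<le> (200/121) ^ m" by (rule power_increasing[OF md]) simp
    finally have l: "(400::real) ^ d < (200/121) ^ m" .
    have "(2::real) ^ m \<le> 400 ^ d * (121/100) ^ m"
    proof -
      have "(20::real) ^ (2 * d) = 400 ^ d" by (simp add: power_mult)
      moreover have "(11/10::real) ^ (2 * m) = (121/100) ^ m" by (simp add: power_mult power2_eq_square)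
      ultimately show ?thesis using b by simp
    qed
    then have "(2::real) ^ m / (121/100) ^ m \<le> 400 ^ d"
      by (simp add: divide_le_eq)
    moreover have "(2::real) ^ m / (121/100) ^ m = (200/121) ^ m"
      by (simp add: power_divide[symmetric])
    ultimately show False using l by simp
  qed
  have e2: "exp (2::real) \<le> 8"
  proof -
    have "exp (2::real) = exp 1 * exp 1" by (simp add: exp_add[symmetric])
    also have "\<dots> \<le> (272/100) * (272/100)"
      using e_less_272 by (intro mult_mono) auto
    finally show ?thesis by simp
  qed
  have "ln (8 * exp 1) = ln (8::real) + 1" by (simp add: ln_mult)
  moreover have "ln (exp 2) \<le> ln (8::real)" using e2 by (subst ln_le_cancel_iff) auto
  then have "ln (8::real) \<ge> 2" by simp
  ultimately have ln3: "ln (8 * exp 1) \<ge> (3::real)" by simp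
  have "real m < real (12 * d)" using \<open>m < 12 * d\<close> by (simp only: of_nat_less_iff)
  then have "real m \<le> 12 * (real d + 1)" by simp
  also have "\<dots> = (4 * (real d + 1)) * 3" by simp
  also have "\<dots> \<le> 4 * (real d + 1) * ln (8 * exp 1)" using ln3
    by (intro mult_left_mono) auto
  finally have "real m \<le> 4 * (real CARD('d) + 1) * ln (8 * exp 1)" unfolding d_def .
  then have "int m \<le> \<lfloor>4 * (real CARD('d) + 1) * ln (8 * exp 1)\<rfloor>"
    by (simp add: le_floor_iff)
  then show "enat (length xs) \<le> enat (nat \<lfloor>4 * (real CARD('d) + 1) * ln (8 * exp 1)\<rfloor>)"
    unfolding m_def by simp
qed

end
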